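(* Let $g:\{0,1\}^n\to\{0,1\}^{m(n)}$ be computable by polynomial-size circuits with $m(n)>n$. If the ensemble $(g(U_n))_{n\in\mathbb{N}}$ is both $\mathsf{NP}/\mathsf{poly}$-unpredictable and $\mathsf{coNP}/\mathsf{poly}$-unpredictable (i.e. $\cup$-unpredictable), then $g$ is super-bits (in the polynomial-security sense below).
   Context: $U_n$ is the uniform distribution on $\{0,1\}^n$. A nondeterministic circuit $D$ accepts $x$ iff some assignment to its nondeterministic inputs makes it output 1; a co-nondeterministic circuit rejects $x$ iff some assignment makes it output 0. $\mathsf{NP}/\mathsf{poly}$ (resp. $\mathsf{coNP}/\mathsf{poly}$) algorithms are nondeterministic (resp. co-nondeterministic) polynomial-size circuit families. $g$ is called super-bits if for every nondeterministic polynomial-size circuit family $D$, every polynomial $p$ and all sufficiently large $n$, $\Pr[D(U_{m(n)})=1]-\Pr[D(g(U_n))=1]<1/p(n)$. For $\mathcal{K}\in\{\mathsf{NP}/\mathsf{poly},\mathsf{coNP}/\mathsf{poly}\}$, an ensemble $(Z_n)$ is $\mathcal{K}$-predictable if there exist an algorithm $\mathcal{A}$ in $\mathcal{K}$, a polynomial $p$, and infinitely many $n$ each with some $i=i(n)<|Z_n|$ such that $\Pr[\mathcal{A}(Z_n[1\ldots i])=Z_n[i+1]]\ge 1/2+1/p(n)$, and $\mathcal{K}$-unpredictable otherwise. *)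

theory Defs
  imports "HOL-Probability.Probability" "HOL-Computational_Algebra.Polynomial"
begin

text \<open>Wires 0..n-1 carry the input bits; gate number j produces wire n+j.
  A gate may only read wires that already exist; reading a non-existent wire
  yields False.\<close>

datatype gate = GConst bool | GNot nat | GAnd nat nat | GOr nat nat

definition rd :: "bool list \<Rightarrow> nat \<Rightarrow> bool" where
  "rd vs j = (if j < length vs then vs ! j else False)"

fun gate_val :: "gate \<Rightarrow> bool list \<Rightarrow> bool" where
  "gate_val (GConst b) vs = b"
| "gate_val (GNot i) vs = (\<not> rd vs i)"
| "gate_val (GAnd i j) vs = (rd vs i \<and> rd vs j)"
| "gate_val (GOr i j) vs = (rd vs i \<or> rd vs j)"

definition eval_wires :: "gate list \<Rightarrow> bool list \<Rightarrow> bool list" where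
  "eval_wires gs x = foldl (\<lambda>vs g. vs @ [gate_val g vs]) x gs"

type_synonym circuit = "gate list \<times> nat list"

definition circ_eval :: "circuit \<Rightarrow> bool list \<Rightarrow> bool list" where
  "circ_eval C x = map (rd (eval_wires (fst C) x)) (snd C)"

definition circ_size :: "circuit \<Rightarrow> nat" where
  "circ_size C = length (fst C) + length (snd C)"

definition circ_dec :: "circuit \<Rightarrow> bool list \<Rightarrow> bool" where
  "circ_dec C x = (case circ_eval C x of [] \<Rightarrow> False | b # _ \<Rightarrow> b)"

text \<open>A (co-)nondeterministic circuit: number k of nondeterministic input bits
  together with a circuit reading the input x followed by the k witness bits.\<close>
type_synonym nd_circuit = "nat \<times> circuit"

definition nd_size :: "nd_circuit \<Rightarrow> nat" where
  "nd_size D = fst D + circ_size (snd D)"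

definition nd_out :: "nd_circuit \<Rightarrow> bool list \<Rightarrow> bool" where
  "nd_out D x = (\<exists>w. length w = fst D \<and> circ_dec (snd D) (x @ w))"

definition cond_out :: "nd_circuit \<Rightarrow> bool list \<Rightarrow> bool" where
  "cond_out D x = (\<forall>w. length w = fst D \<longrightarrow> circ_dec (snd D) (x @ w))"

definition poly_bounded :: "(nat \<Rightarrow> nat) \<Rightarrow> bool" where
  "poly_bounded f \<longleftrightarrow> (\<exists>c k. \<forall>n. f n \<le> c * n ^ k + c)"

definition pos_poly :: "real poly \<Rightarrow> bool" where
  "pos_poly p \<longleftrightarrow> lead_coeff p > 0"

definition bitstrings :: "nat \<Rightarrow> bool list set" where
  "bitstrings n = {xs. length xs = n}"

definition U :: "nat \<Rightarrow> bool list pmf" where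
  "U n = pmf_of_set (bitstrings n)"

definition poly_circuit_computable :: "(bool list \<Rightarrow> bool list) \<Rightarrow> bool" where
  "poly_circuit_computable g \<longleftrightarrow>
     (\<exists>C :: nat \<Rightarrow> circuit. poly_bounded (\<lambda>n. circ_size (C n)) \<and>
        (\<forall>n x. length x = n \<longrightarrow> circ_eval (C n) x = g x))"

definition predictable ::
  "(nd_circuit \<Rightarrow> bool list \<Rightarrow> bool) \<Rightarrow> (nat \<Rightarrow> bool list pmf) \<Rightarrow> (nat \<Rightarrow> nat) \<Rightarrow> bool" where
  "predictable sem Z len \<longleftrightarrow>
     (\<exists>A :: nat \<Rightarrow> nd_circuit. poly_bounded (\<lambda>n. nd_size (A n)) \<and>
       (\<exists>p. pos_poly p \<and>
          infinite {n. \<exists>i < len n.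
             measure_pmf.prob (Z n) {z. sem (A n) (take i z) = z ! i}
               \<ge> 1/2 + 1 / poly p (real n)}))"

definition NP_unpredictable :: "(nat \<Rightarrow> bool list pmf) \<Rightarrow> (nat \<Rightarrow> nat) \<Rightarrow> bool" where
  "NP_unpredictable Z len \<longleftrightarrow> \<not> predictable nd_out Z len"

definition coNP_unpredictable :: "(nat \<Rightarrow> bool list pmf) \<Rightarrow> (nat \<Rightarrow> nat) \<Rightarrow> bool" where
  "coNP_unpredictable Z len \<longleftrightarrow> \<not> predictable cond_out Z len"

definition super_bits :: "(bool list \<Rightarrow> bool list) \<Rightarrow> (nat \<Rightarrow> nat) \<Rightarrow> bool" where
  "super_bits g m \<longleftrightarrow>
     (\<forall>D :: nat \<Rightarrow> nd_circuit. poly_bounded (\<lambda>n. nd_size (D n)) \<longrightarrow>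
       (\<forall>p. pos_poly p \<longrightarrow>
          (\<forall>\<^sub>F n in sequentially.
             measure_pmf.prob (U (m n)) {y. nd_out (D n) y}
             - measure_pmf.prob (map_pmf g (U n)) {y. nd_out (D n) y}
             < 1 / poly p (real n))))"

end

theory Submission
  imports Defs
begin


lemma bitstrings_finite[simp]: "finite (bitstrings k)"
proof -
  have "bitstrings k = {xs. set xs \<subseteq> (UNIV::bool set) \<and> length xs = k}"
    by (auto simp: bitstrings_def)
  thus ?thesis using finite_lists_length_eq[of "UNIV::bool set" k] by simp
qed

lemma bitstrings_card: "card (bitstrings k) = 2 ^ k"
proof -
  have "bitstrings k = {xs. set xs \<subseteq> (UNIV::bool set) \<and> length xs = k}"
    by (auto simp: bitstrings_def)
  thus ?thesis using card_lists_length_eq[of "UNIV::bool set" k] by simp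
qed

lemma bitstrings_ne: "bitstrings k \<noteq> {}"
  using bitstrings_card[of k] by (metis card.empty power_not_zero zero_neq_numeral)

lemma sum_bitstrings_Suc:
  "(\<Sum>r\<in>bitstrings (Suc k). f r) = (\<Sum>r\<in>bitstrings k. f (True # r) + f (False # r))"
proof -
  have e: "bitstrings (Suc k) = (\<lambda>(b,r). b # r) ` (UNIV \<times> bitstrings k)"
    by (auto simp: bitstrings_def length_Suc_conv)
  have i: "inj_on (\<lambda>(b,r). b # r) (UNIV \<times> bitstrings k)" by (auto simp: inj_on_def)
  have "(\<Sum>r\<in>bitstrings (Suc k). f r) = (\<Sum>(b,r)\<in>UNIV \<times> bitstrings k. f (b # r))"
    unfolding e by (subst sum.reindex[OF i]) (simp add: case_prod_beta)
  also have "\<dots> = (\<Sum>b\<in>UNIV. \<Sum>r\<in>bitstrings k. f (b # r))"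
    by (simp add: sum.cartesian_product)
  also have "\<dots> = (\<Sum>r\<in>bitstrings k. f (True # r) + f (False # r))"
    by (simp add: UNIV_bool sum.distrib add.commute)
  finally show ?thesis .
qed

lemma prob_U: "measure_pmf.prob (U k) S = (\<Sum>y\<in>bitstrings k. indicator S y) / 2 ^ k"
proof -
  have "measure_pmf.prob (U k) S = card (bitstrings k \<inter> S) / card (bitstrings k)"
    unfolding U_def by (rule measure_pmf_of_set[OF bitstrings_ne bitstrings_finite])
  also have "real (card (bitstrings k \<inter> S)) = (\<Sum>y\<in>bitstrings k. indicator S y)"
    by (simp add: indicator_def sum.If_cases Int_commute)
  finally show ?thesis by (simp add: bitstrings_card)
qed

lemma prob_map_U: "measure_pmf.prob (map_pmf g (U k)) S = (\<Sum>y\<in>bitstrings k. indicator S (g y)) / 2 ^ k"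
  by (simp add: prob_U indicator_def)



fun remap_gate :: "(nat \<Rightarrow> nat) \<Rightarrow> gate \<Rightarrow> gate" where
  "remap_gate f (GConst b) = GConst b"
| "remap_gate f (GNot i) = GNot (f i)"
| "remap_gate f (GAnd i j) = GAnd (f i) (f j)"
| "remap_gate f (GOr i j) = GOr (f i) (f j)"

lemma eval_wires_Cons: "eval_wires (g # gs) x = eval_wires gs (x @ [gate_val g x])"
  by (simp add: eval_wires_def)

lemma eval_wires_Nil[simp]: "eval_wires [] x = x"
  by (simp add: eval_wires_def)

lemma eval_wires_append: "eval_wires (gs @ hs) x = eval_wires hs (eval_wires gs x)"
  by (simp add: eval_wires_def)

lemma length_eval_wires[simp]: "length (eval_wires gs x) = length x + length gs"
  by (induction gs arbitrary: x) (auto simp: eval_wires_Cons)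

lemma eval_wires_consts: "eval_wires (map GConst c) x = x @ c"
  by (induction c arbitrary: x) (auto simp: eval_wires_Cons)

lemma gate_val_remap:
  assumes "\<forall>j. rd vs' (f j) = rd vs j"
  shows "gate_val (remap_gate f g) vs' = gate_val g vs"
  using assms by (cases g) auto

lemma remap_eval:
  assumes "length vs' = length vs" "L \<le> length vs" "\<forall>j\<ge>L. f j = j" "\<forall>j<L. f j < L"
    "\<forall>j. rd vs' (f j) = rd vs j"
  shows "\<forall>j. rd (eval_wires (map (remap_gate f) gs) vs') (f j) = rd (eval_wires gs vs) j"
  using assms
proof (induction gs arbitrary: vs vs')
  case Nil
  then show ?case by simp
next
  case (Cons g gs)
  define v where "v = gate_val g vs"
  have gv: "gate_val (remap_gate f g) vs' = v"
    unfolding v_def by (rule gate_val_remap[OF Cons.prems(5)])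
  have "\<forall>j. rd (vs' @ [v]) (f j) = rd (vs @ [v]) j"
  proof
    fix j
    show "rd (vs' @ [v]) (f j) = rd (vs @ [v]) j"
    proof (cases "j < length vs")
      case True
      have "f j < length vs'"
        using Cons.prems True by (cases "j < L") force+
      then show ?thesis using True Cons.prems(5)[rule_format, of j]
        by (simp add: rd_def nth_append)
    next
      case False
      then have "f j = j" using Cons.prems by auto
      then show ?thesis using False Cons.prems(1) by (simp add: rd_def nth_append)
    qed
  qed
  moreover have "length (vs' @ [v]) = length (vs @ [v])" "L \<le> length (vs @ [v])"
    using Cons.prems by auto
  ultimately have "\<forall>j. rd (eval_wires (map (remap_gate f) gs) (vs' @ [v])) (f j) = rd (eval_wires gs (vs @ [v])) j"
    using Cons.IH Cons.prems(3,4) by blast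
  then show ?case by (simp add: eval_wires_Cons gv v_def)
qed

definition perm_f :: "nat \<Rightarrow> nat \<Rightarrow> nat \<Rightarrow> nat \<Rightarrow> nat" where
  "perm_f i lc k j = (if j < i then j else if j < i + lc then j + k
      else if j < i + lc + k then j - lc else j)"

definition fix_circ :: "nat \<Rightarrow> bool list \<Rightarrow> nat \<Rightarrow> circuit \<Rightarrow> circuit" where
  "fix_circ i c k C = (map GConst c @ map (remap_gate (perm_f i (length c) k)) (fst C),
                       map (perm_f i (length c) k) (snd C))"

lemma fix_circ_eval:
  assumes "length y = i" "length w = k"
  shows "circ_eval (fix_circ i c k C) (y @ w) = circ_eval C (y @ c @ w)"
proof -
  define f where "f = perm_f i (length c) k"
  define L where "L = i + length c + k"
  have init: "\<forall>j. rd (y @ w @ c) (f j) = rd (y @ c @ w) j"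
  proof
    fix j
    consider "j < i" | "i \<le> j" "j < i + length c" | "i + length c \<le> j" "j < i + length c + k"
      | "i + length c + k \<le> j" by linarith
    then show "rd (y @ w @ c) (f j) = rd (y @ c @ w) j"
    proof cases
      case 1 then show ?thesis using assms unfolding f_def perm_f_def rd_def
        by (simp add: nth_append)
    next
      case 2
      then have "j - i < length c" "\<not> j + k - i < k" by auto
      then show ?thesis using 2 assms unfolding f_def perm_f_def rd_def
        by (simp add: nth_append)
    next
      case 3
      then obtain t where t: "j = i + length c + t" "t < k"
        by (metis add_less_cancel_left le_add_diff_inverse)
      then show ?thesis using assms unfolding f_def perm_f_def rd_def
        by (simp add: nth_append)
    next
      case 4 then show ?thesis using assms unfolding f_def perm_f_def rd_def
        by (simp add: nth_append)
    qed
  qed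
  have "\<forall>j. rd (eval_wires (map (remap_gate f) (fst C)) (y @ w @ c)) (f j)
           = rd (eval_wires (fst C) (y @ c @ w)) j"
    by (rule remap_eval[where L=L]) (use assms init in \<open>auto simp: L_def f_def perm_f_def\<close>)
  then show ?thesis
    by (simp add: fix_circ_def circ_eval_def eval_wires_append eval_wires_consts f_def)
qed

lemma fix_circ_dec:
  assumes "length y = i" "length w = k"
  shows "circ_dec (fix_circ i c k C) (y @ w) = circ_dec C (y @ c @ w)"
  using fix_circ_eval[OF assms] by (simp add: circ_dec_def)

lemma fix_circ_size: "circ_size (fix_circ i c k C) = length c + circ_size C"
  by (simp add: fix_circ_def circ_size_def)

definition neg_circ :: "circuit \<Rightarrow> nat \<Rightarrow> circuit" where
  "neg_circ C l = (fst C @ [case snd C of [] \<Rightarrow> GConst True | o1 # _ \<Rightarrow> GNot o1], [l + length (fst C)])"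

lemma neg_circ_dec:
  assumes "length x = l"
  shows "circ_dec (neg_circ C l) x = (\<not> circ_dec C x)"
  using assms
  by (cases "snd C") (auto simp: neg_circ_def circ_dec_def circ_eval_def eval_wires_append
      eval_wires_Cons rd_def nth_append)

lemma neg_circ_size: "circ_size (neg_circ C l) \<le> circ_size C + 2"
  by (simp add: neg_circ_def circ_size_def)

definition nd_fix :: "nat \<Rightarrow> bool list \<Rightarrow> nd_circuit \<Rightarrow> nd_circuit" where
  "nd_fix i c D = (fst D, fix_circ i c (fst D) (snd D))"

definition co_fix :: "nat \<Rightarrow> bool list \<Rightarrow> nd_circuit \<Rightarrow> nd_circuit" where
  "co_fix i c D = (fst D, neg_circ (fix_circ i c (fst D) (snd D)) (i + fst D))"

lemma nd_fix_out: "length y = i \<Longrightarrow> nd_out (nd_fix i c D) y = nd_out D (y @ c)"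
  by (auto simp: nd_out_def nd_fix_def fix_circ_dec)

lemma co_fix_out: "length y = i \<Longrightarrow> cond_out (co_fix i c D) y = (\<not> nd_out D (y @ c))"
  by (auto simp: nd_out_def cond_out_def co_fix_def fix_circ_dec neg_circ_dec)

lemma nd_fix_size: "nd_size (nd_fix i c D) \<le> nd_size D + length c + 2"
  by (simp add: nd_size_def nd_fix_def fix_circ_size)

lemma co_fix_size: "nd_size (co_fix i c D) \<le> nd_size D + length c + 2"
  using neg_circ_size[of "fix_circ i c (fst D) (snd D)" "i + fst D"]
  by (simp add: nd_size_def co_fix_def fix_circ_size)



lemma bitstrings_0: "bitstrings 0 = {[]}"
  by (auto simp: bitstrings_def)

lemma exists_ge_avg:
  fixes f :: "nat \<Rightarrow> real"
  assumes "M > 0" "(\<Sum>i<M. f i) \<ge> s"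
  shows "\<exists>i<M. f i \<ge> s / M"
proof (rule ccontr)
  assume "\<not> ?thesis"
  then have "\<forall>i\<in>{..<M}. f i < s / M" by auto
  then have "(\<Sum>i<M. f i) < (\<Sum>i<M. s / M)"
    using assms by (intro sum_strict_mono) auto
  also have "\<dots> = s" using assms by simp
  finally show False using assms by simp
qed

lemma hybrid:
  fixes d :: "bool list \<Rightarrow> bool" and G :: "bool list \<Rightarrow> bool list"
  assumes len: "\<And>x. x \<in> bitstrings n \<Longrightarrow> length (G x) = M" and M: "M > 0"
  shows "\<exists>i<M. \<exists>b r. r \<in> bitstrings (M - Suc i) \<and>
     (\<Sum>x\<in>bitstrings n. of_bool ((if d (take i (G x) @ b # r) then \<not> b else b) = G x ! i)) / 2 ^ n
       \<ge> 1/2 + ((\<Sum>y\<in>bitstrings M. of_bool (d y)) / 2 ^ M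
                 - (\<Sum>x\<in>bitstrings n. of_bool (d (G x))) / 2 ^ n) / M"
proof -
  define B where "B = bitstrings"
  define P :: "nat \<Rightarrow> real" where "P i = (\<Sum>x\<in>B n. \<Sum>r\<in>B (M - i). of_bool (d (take i (G x) @ r)))
      / (2 ^ n * 2 ^ (M - i))" for i
  define \<delta> :: real where "\<delta> = (\<Sum>y\<in>bitstrings M. of_bool (d y)) / 2 ^ M
                 - (\<Sum>x\<in>bitstrings n. of_bool (d (G x))) / 2 ^ n"
  have P0: "P 0 = (\<Sum>y\<in>bitstrings M. of_bool (d y)) / 2 ^ M"
    by (simp add: P_def B_def bitstrings_card)
  have PM: "P M = (\<Sum>x\<in>bitstrings n. of_bool (d (G x))) / 2 ^ n"
    unfolding P_def B_def using len by (simp add: bitstrings_0)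
  have "(\<Sum>i<M. P i - P (Suc i)) = \<delta>"
    by (simp add: sum_lessThan_telescope' P0 PM \<delta>_def)
  then obtain i where i: "i < M" and Pi: "P i - P (Suc i) \<ge> \<delta> / M"
    using exists_ge_avg[OF M, where f="\<lambda>i. P i - P (Suc i)" and s=\<delta>] by auto
  define k where "k = M - Suc i"
  have Mi: "M - i = Suc k" using i by (simp add: k_def)
  define S1 :: real where "S1 = (\<Sum>x\<in>B n. \<Sum>r\<in>B k. of_bool (d (take i (G x) @ (G x ! i) # r)))"
  define S0 :: real where "S0 = (\<Sum>x\<in>B n. \<Sum>r\<in>B k. of_bool (d (take i (G x) @ (\<not> G x ! i) # r)))"
  have "(\<Sum>x\<in>B n. \<Sum>r\<in>B (M - i). of_bool (d (take i (G x) @ r)) :: real) = S1 + S0"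
  proof -
    have sw: "(of_bool (d (a @ True # r)) + of_bool (d (a @ False # r)) :: real)
       = of_bool (d (a @ c # r)) + of_bool (d (a @ (\<not> c) # r))" for a c r
      by (cases c) auto
    show ?thesis
      unfolding Mi B_def sum_bitstrings_Suc S1_def S0_def sum.distrib[symmetric]
      by (intro sum.cong refl) (rule sw)
  qed
  then have Pi_eq: "P i = (S1 + S0) / (2 ^ n * 2 ^ Suc k)" by (simp add: P_def Mi)
  have "(\<Sum>x\<in>B n. \<Sum>r\<in>B (M - Suc i). of_bool (d (take (Suc i) (G x) @ r)) :: real) = S1"
    unfolding S1_def k_def
    by (intro sum.cong refl) (use len i in \<open>auto simp: B_def take_Suc_conv_app_nth\<close>)
  then have PSi_eq: "P (Suc i) = S1 / (2 ^ n * 2 ^ k)" by (simp add: P_def k_def)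
  define Corr :: "bool \<Rightarrow> bool list \<Rightarrow> real" where "Corr b r = (\<Sum>x\<in>B n. of_bool ((if d (take i (G x) @ b # r) then \<not> b else b) = G x ! i)) / 2 ^ n" for b r
  define \<tau> where "\<tau> = 1/2 + P i - P (Suc i)"
  have per: "of_bool ((if d (take i (G x) @ True # r) then \<not> True else True) = G x ! i)
      + of_bool ((if d (take i (G x) @ False # r) then \<not> False else False) = G x ! i)
      = 1 - of_bool (d (take i (G x) @ (G x ! i) # r)) + (of_bool (d (take i (G x) @ (\<not> G x ! i) # r)) :: real)"
    for x r by (cases "G x ! i") auto
  have "(\<Sum>r\<in>B k. Corr True r + Corr False r) = (\<Sum>r\<in>B k. \<Sum>x\<in>B n.
      1 - of_bool (d (take i (G x) @ (G x ! i) # r)) + (of_bool (d (take i (G x) @ (\<not> G x ! i) # r)) :: real)) / 2 ^ n"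
    unfolding Corr_def by (simp add: per sum.distrib[symmetric] add_divide_distrib[symmetric] sum_divide_distrib)
  also have "\<dots> = (2 ^ k * 2 ^ n - S1 + S0) / 2 ^ n"
  proof -
    have e1: "(\<Sum>r\<in>B k. \<Sum>x\<in>B n.
      1 - of_bool (d (take i (G x) @ (G x ! i) # r)) + (of_bool (d (take i (G x) @ (\<not> G x ! i) # r)) :: real))
      = (\<Sum>r\<in>B k. \<Sum>x\<in>B n. (1::real)) - (\<Sum>r\<in>B k. \<Sum>x\<in>B n. of_bool (d (take i (G x) @ (G x ! i) # r)))
        + (\<Sum>r\<in>B k. \<Sum>x\<in>B n. of_bool (d (take i (G x) @ (\<not> G x ! i) # r)))"
      by (simp only: sum.distrib sum_subtractf)
    have e2: "(\<Sum>r\<in>B k. \<Sum>x\<in>B n. (1::real)) = 2 ^ k * 2 ^ n"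
      by (simp add: B_def bitstrings_card)
    have e3: "(\<Sum>r\<in>B k. \<Sum>x\<in>B n. of_bool (d (take i (G x) @ (G x ! i) # r)) :: real) = S1"
      unfolding S1_def by (rule sum.swap)
    have e4: "(\<Sum>r\<in>B k. \<Sum>x\<in>B n. of_bool (d (take i (G x) @ (\<not> G x ! i) # r)) :: real) = S0"
      unfolding S0_def by (rule sum.swap)
    show ?thesis unfolding e1 e2 e3 e4 ..
  qed
  also have "\<dots> = 2 ^ Suc k * \<tau>"
    unfolding \<tau>_def Pi_eq PSi_eq by (simp add: field_simps)
  finally have sumC: "(\<Sum>r\<in>B k. Corr True r + Corr False r) = 2 ^ Suc k * \<tau>" .
  have "\<exists>b. \<exists>r\<in>B k. Corr b r \<ge> \<tau>"
  proof (rule ccontr)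
    assume "\<not> ?thesis"
    then have "\<forall>b. \<forall>r\<in>B k. Corr b r < \<tau>" by (auto simp: not_le)
    then have "\<forall>r\<in>B k. Corr True r + Corr False r < 2 * \<tau>"
      by (metis add_strict_mono mult_2)
    then have "(\<Sum>r\<in>B k. Corr True r + Corr False r) < (\<Sum>r\<in>B k. 2 * \<tau>)"
      by (intro sum_strict_mono) (auto simp: B_def bitstrings_ne)
    also have "\<dots> = 2 ^ Suc k * \<tau>" by (simp add: B_def bitstrings_card)
    finally show False using sumC by simp
  qed
  then obtain b r where r: "r \<in> B k" and C: "Corr b r \<ge> \<tau>" by auto
  have "\<tau> \<ge> 1/2 + \<delta> / M" using Pi by (simp add: \<tau>_def)
  then show ?thesis using i r C unfolding Corr_def B_def k_def \<delta>_def
    by (intro exI[of _ i] conjI exI[of _ b] exI[of _ r]) auto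
qed



lemma poly_bounded_mono: "poly_bounded g \<Longrightarrow> (\<And>n. f n \<le> g n) \<Longrightarrow> poly_bounded f"
  unfolding poly_bounded_def by (meson order_trans)

lemma pow_le_pow_plus1: "(n::nat) ^ a \<le> n ^ (a + b) + 1"
proof (cases "n = 0")
  case True then show ?thesis by (cases a) auto
next
  case False
  then have "n ^ a \<le> n ^ (a + b)" by (intro power_increasing) auto
  then show ?thesis by simp
qed

lemma poly_bounded_add: "poly_bounded f \<Longrightarrow> poly_bounded g \<Longrightarrow> poly_bounded (\<lambda>n. f n + g n + c)"
proof -
  assume "poly_bounded f" "poly_bounded g"
  then obtain c1 k1 c2 k2 where f: "\<And>n. f n \<le> c1 * n ^ k1 + c1" and g: "\<And>n. g n \<le> c2 * n ^ k2 + c2"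
    unfolding poly_bounded_def by blast
  have "f n + g n + c \<le> (2*c1 + 2*c2 + c) * n ^ (k1 + k2) + (2*c1 + 2*c2 + c)" for n
  proof -
    have a: "n ^ k1 \<le> n ^ (k1 + k2) + 1" by (rule pow_le_pow_plus1)
    have b: "n ^ k2 \<le> n ^ (k1 + k2) + 1" using pow_le_pow_plus1[of n k2 k1] by (simp add: add.commute)
    have "c1 * n ^ k1 \<le> c1 * (n ^ (k1 + k2) + 1)" using a by (rule mult_left_mono) simp
    moreover have "c2 * n ^ k2 \<le> c2 * (n ^ (k1 + k2) + 1)" using b by (rule mult_left_mono) simp
    ultimately have "f n + g n + c \<le> c1 * (n ^ (k1 + k2) + 1) + c1 + c2 * (n ^ (k1 + k2) + 1) + c2 + c"
      using f[of n] g[of n] by linarith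
    also have "\<dots> \<le> (2*c1 + 2*c2 + c) * n ^ (k1 + k2) + (2*c1 + 2*c2 + c)"
      by (simp add: algebra_simps)
    finally show ?thesis .
  qed
  then show ?thesis unfolding poly_bounded_def by blast
qed



theorem proposition5p3:
  fixes g :: "bool list \<Rightarrow> bool list" and m :: "nat \<Rightarrow> nat"
  assumes "\<And>x. length (g x) = m (length x)"
    and "poly_circuit_computable g"
    and "\<And>n. m n > n"
    and "NP_unpredictable (\<lambda>n. map_pmf g (U n)) m"
    and "coNP_unpredictable (\<lambda>n. map_pmf g (U n)) m"
  shows "super_bits g m"
proof (rule ccontr)
  assume "\<not> super_bits g m"
  then obtain D p where polyD: "poly_bounded (\<lambda>n. nd_size (D n))" and pp: "pos_poly p"
    and ne: "\<not> (\<forall>\<^sub>F n in sequentially.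
             measure_pmf.prob (U (m n)) {y. nd_out (D n) y}
             - measure_pmf.prob (map_pmf g (U n)) {y. nd_out (D n) y}
             < 1 / poly p (real n))"
    unfolding super_bits_def by blast
  define diff where "diff n = measure_pmf.prob (U (m n)) {y. nd_out (D n) y}
             - measure_pmf.prob (map_pmf g (U n)) {y. nd_out (D n) y}" for n
  have freq: "\<forall>N. \<exists>n\<ge>N. diff n \<ge> 1 / poly p (real n)"
    using ne unfolding not_eventually frequently_sequentially diff_def by (auto simp: not_less)
  obtain C where Cpb: "poly_bounded (\<lambda>n. circ_size (C n))"
    and Cg: "\<And>n x. length x = n \<Longrightarrow> circ_eval (C n) x = g x"
    using assms(2) unfolding poly_circuit_computable_def by blast
  have mle: "m n \<le> circ_size (C n)" for n
  proof -
    have "m n = length (g (replicate n False))" using assms(1) by simp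
    also have "\<dots> = length (snd (C n))" using Cg[of "replicate n False" n] by (simp add: circ_eval_def) (metis length_map)
    finally show ?thesis by (simp add: circ_size_def)
  qed
  have mpb: "poly_bounded m" by (rule poly_bounded_mono[OF Cpb mle])
  then obtain c2 k2 where m_bd: "\<And>n. m n \<le> c2 * n ^ k2 + c2" unfolding poly_bounded_def by blast
  obtain N0 where N0: "\<And>x. x \<ge> N0 \<Longrightarrow> poly p x \<ge> lead_coeff p"
    using poly_pinfty_gt_lc[of p] pp unfolding pos_poly_def by blast
  have lc: "lead_coeff p > 0" using pp unfolding pos_poly_def .
  define q where "q = smult (2 * (real c2 + 1)) (p * monom 1 k2)"
  have qpos: "pos_poly q" using lc
    by (simp add: q_def pos_poly_def lead_coeff_smult lead_coeff_mult degree_monom_eq)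
  have polyq: "poly q x = 2 * (real c2 + 1) * poly p x * x ^ k2" for x
    by (simp add: q_def poly_monom)
  define F where "F = {n. n \<ge> max N0 1 \<and> diff n \<ge> 1 / poly p (real n)}"
  have Finf: "infinite F"
    unfolding infinite_nat_iff_unbounded_le
  proof
    fix N
    obtain n where n: "n \<ge> max N (nat \<lceil>N0\<rceil> + 1)" "diff n \<ge> 1 / poly p (real n)" using freq by blast
    have "nat \<lceil>N0\<rceil> \<le> n" using n(1) by (meson le_add1 max.bounded_iff order_trans)
    then have "real n \<ge> N0" by (metis real_nat_ceiling_ge of_nat_le_iff order_trans)
    then show "\<exists>n\<ge>N. n \<in> F" using n unfolding F_def by auto
  qed
  define corr :: "nat \<Rightarrow> nat \<Rightarrow> bool \<Rightarrow> bool list \<Rightarrow> real" where "corr n i b r = (\<Sum>x\<in>bitstrings n. of_bool ((if nd_out (D n) (take i (g x) @ b # r) then \<not> b else b) = g x ! i)) / 2 ^ n" for n i b r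
  have key: "\<exists>i b r. i < m n \<and> r \<in> bitstrings (m n - Suc i) \<and> corr n i b r \<ge> 1/2 + 1 / poly q (real n)"
    if nF: "n \<in> F" for n
  proof -
    have M: "m n > 0" using assms(3)[of n] by simp
    have len: "\<And>x. x \<in> bitstrings n \<Longrightarrow> length (g x) = m n"
      using assms(1) by (simp add: bitstrings_def)
    obtain i b r where i: "i < m n" and r: "r \<in> bitstrings (m n - Suc i)"
      and c: "corr n i b r \<ge> 1/2 + ((\<Sum>y\<in>bitstrings (m n). of_bool (nd_out (D n) y)) / 2 ^ (m n)
                 - (\<Sum>x\<in>bitstrings n. of_bool (nd_out (D n) (g x))) / 2 ^ n) / m n"
      using hybrid[where d="nd_out (D n)" and G=g and n=n and M="m n", OF len M] unfolding corr_def by blast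
    have dd: "diff n = ((\<Sum>y\<in>bitstrings (m n). of_bool (nd_out (D n) y)) / 2 ^ (m n)
                 - (\<Sum>x\<in>bitstrings n. of_bool (nd_out (D n) (g x))) / 2 ^ n)"
      unfolding diff_def prob_U prob_map_U by (simp add: indicator_def)
    have nge: "n \<ge> N0" "n \<ge> 1" using nF by (auto simp: F_def)
    have pn: "poly p (real n) > 0" using N0[of "real n"] nge lc by simp
    have dn: "diff n \<ge> 1 / poly p (real n)" using nF by (simp add: F_def)
    have mn: "real (m n) \<le> 2 * (real c2 + 1) * real n ^ k2"
    proof -
      have "real (m n) \<le> real c2 * real n ^ k2 + real c2" using m_bd[of n]
        by (metis of_nat_add of_nat_le_iff of_nat_mult of_nat_power)
      moreover have "real n ^ k2 \<ge> 1" using nge by simp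
      then have "real c2 * 1 \<le> real c2 * real n ^ k2" by (intro mult_left_mono) auto
      ultimately have "real (m n) \<le> 2 * real c2 * real n ^ k2" by linarith
      also have "\<dots> \<le> 2 * (real c2 + 1) * real n ^ k2" by (intro mult_right_mono) auto
      finally show ?thesis .
    qed
    have "1 / poly q (real n) \<le> 1 / (poly p (real n) * m n)"
    proof (rule divide_left_mono)
      show "poly p (real n) * real (m n) \<le> poly q (real n)"
        unfolding polyq using mult_left_mono[OF mn less_imp_le[OF pn]] by (simp add: algebra_simps)
      show "0 < poly q (real n) * (poly p (real n) * real (m n))"
        unfolding polyq using pn M nge by (simp add: zero_less_mult_iff)
    qed simp
    also have "\<dots> = (1 / poly p (real n)) / m n" by simp
    also have "\<dots> \<le> diff n / m n" using divide_right_mono[OF dn, of "real (m n)"] by simp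
    finally have "corr n i b r \<ge> 1/2 + 1 / poly q (real n)" using c dd by simp
    then show ?thesis using i r by blast
  qed
  have ex: "\<forall>n\<in>F. \<exists>t. fst t < m n \<and> snd (snd t) \<in> bitstrings (m n - Suc (fst t))
      \<and> corr n (fst t) (fst (snd t)) (snd (snd t)) \<ge> 1/2 + 1 / poly q (real n)"
  proof
    fix n assume "n \<in> F"
    from key[OF this] obtain i b r where ibr: "i < m n \<and> r \<in> bitstrings (m n - Suc i) \<and> corr n i b r \<ge> 1/2 + 1 / poly q (real n)"
      by blast
    let ?t = "(i, b, r)"
    have "fst ?t < m n \<and> snd (snd ?t) \<in> bitstrings (m n - Suc (fst ?t))
      \<and> corr n (fst ?t) (fst (snd ?t)) (snd (snd ?t)) \<ge> 1/2 + 1 / poly q (real n)"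
      using ibr by simp
    then show "\<exists>t. fst t < m n \<and> snd (snd t) \<in> bitstrings (m n - Suc (fst t))
      \<and> corr n (fst t) (fst (snd t)) (snd (snd t)) \<ge> 1/2 + 1 / poly q (real n)"
      by blast
  qed
  then obtain T where T: "\<And>n. n \<in> F \<Longrightarrow> fst (T n) < m n \<and> snd (snd (T n)) \<in> bitstrings (m n - Suc (fst (T n)))
      \<and> corr n (fst (T n)) (fst (snd (T n))) (snd (snd (T n))) \<ge> 1/2 + 1 / poly q (real n)"
    using bchoice[OF ex] by blast
  define I where "I n = fst (T n)" for n
  define Bf where "Bf n = fst (snd (T n))" for n
  define R where "R n = snd (snd (T n))" for n
  have TI: "I n < m n" "length (R n) = m n - Suc (I n)"
    "corr n (I n) (Bf n) (R n) \<ge> 1/2 + 1 / poly q (real n)" if "n \<in> F" for n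
    using T[OF that] by (auto simp: I_def Bf_def R_def bitstrings_def)
  have size_pb: "poly_bounded (\<lambda>n. nd_size (D n) + m n + 2)"
    by (rule poly_bounded_add[OF polyD mpb])
  have probeq: "measure_pmf.prob (map_pmf g (U n)) {z. s (take i z) = z ! i}
      = (\<Sum>x\<in>bitstrings n. of_bool (s (take i (g x)) = g x ! i)) / 2 ^ n" for s i n
    unfolding prob_map_U by (simp add: indicator_def)
  have "infinite {n\<in>F. \<not> Bf n} \<or> infinite {n\<in>F. Bf n}"
  proof (rule ccontr)
    assume "\<not> ?thesis"
    then have "finite ({n\<in>F. \<not> Bf n} \<union> {n\<in>F. Bf n})" by auto
    moreover have "{n\<in>F. \<not> Bf n} \<union> {n\<in>F. Bf n} = F" by auto
    ultimately show False using Finf by simp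
  qed
  then show False
  proof
    assume inf0: "infinite {n\<in>F. \<not> Bf n}"
    define A where "A n = (if n \<in> F then nd_fix (I n) (False # R n) (D n) else (0, ([], [])))" for n
    have "nd_size (A n) \<le> nd_size (D n) + m n + 2" for n
    proof (cases "n \<in> F")
      case True
      then show ?thesis using nd_fix_size[of "I n" "False # R n" "D n"] TI[OF True]
        by (simp add: A_def)
    next
      case False then show ?thesis by (simp add: A_def nd_size_def circ_size_def)
    qed
    then have Apb: "poly_bounded (\<lambda>n. nd_size (A n))" by (rule poly_bounded_mono[OF size_pb])
    have "{n\<in>F. \<not> Bf n} \<subseteq> {n. \<exists>i < m n. measure_pmf.prob (map_pmf g (U n)) {z. nd_out (A n) (take i z) = z ! i}
               \<ge> 1/2 + 1 / poly q (real n)}"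
    proof safe
      fix n assume nF: "n \<in> F" and b: "\<not> Bf n"
      have "(\<Sum>x\<in>bitstrings n. of_bool (nd_out (A n) (take (I n) (g x)) = g x ! I n) :: real)
          = (\<Sum>x\<in>bitstrings n. of_bool ((if nd_out (D n) (take (I n) (g x) @ Bf n # R n) then \<not> Bf n else Bf n) = g x ! I n))"
      proof (intro sum.cong refl)
        fix x assume "x \<in> bitstrings n"
        then have "length (take (I n) (g x)) = I n" using TI(1)[OF nF] assms(1) by (simp add: bitstrings_def)
        then show "of_bool (nd_out (A n) (take (I n) (g x)) = g x ! I n)
          = (of_bool ((if nd_out (D n) (take (I n) (g x) @ Bf n # R n) then \<not> Bf n else Bf n) = g x ! I n) :: real)"
          using b nF by (simp add: A_def nd_fix_out)
      qed
      then show "\<exists>i < m n. measure_pmf.prob (map_pmf g (U n)) {z. nd_out (A n) (take i z) = z ! i}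
               \<ge> 1/2 + 1 / poly q (real n)"
        using TI[OF nF] unfolding probeq corr_def by (intro exI[of _ "I n"]) simp
    qed
    then have "infinite {n. \<exists>i < m n. measure_pmf.prob (map_pmf g (U n)) {z. nd_out (A n) (take i z) = z ! i}
               \<ge> 1/2 + 1 / poly q (real n)}" using inf0 infinite_super by blast
    then have "predictable nd_out (\<lambda>n. map_pmf g (U n)) m"
      unfolding predictable_def using Apb qpos by blast
    then show False using assms(4) unfolding NP_unpredictable_def by blast
  next
    assume inf1: "infinite {n\<in>F. Bf n}"
    define A where "A n = (if n \<in> F then co_fix (I n) (True # R n) (D n) else (0, ([], [])))" for n
    have "nd_size (A n) \<le> nd_size (D n) + m n + 2" for n
    proof (cases "n \<in> F")
      case True
      then show ?thesis using co_fix_size[of "I n" "True # R n" "D n"] TI[OF True]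
        by (simp add: A_def)
    next
      case False then show ?thesis by (simp add: A_def nd_size_def circ_size_def)
    qed
    then have Apb: "poly_bounded (\<lambda>n. nd_size (A n))" by (rule poly_bounded_mono[OF size_pb])
    have "{n\<in>F. Bf n} \<subseteq> {n. \<exists>i < m n. measure_pmf.prob (map_pmf g (U n)) {z. cond_out (A n) (take i z) = z ! i}
               \<ge> 1/2 + 1 / poly q (real n)}"
    proof safe
      fix n assume nF: "n \<in> F" and b: "Bf n"
      have "(\<Sum>x\<in>bitstrings n. of_bool (cond_out (A n) (take (I n) (g x)) = g x ! I n) :: real)
          = (\<Sum>x\<in>bitstrings n. of_bool ((if nd_out (D n) (take (I n) (g x) @ Bf n # R n) then \<not> Bf n else Bf n) = g x ! I n))"
      proof (intro sum.cong refl)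
        fix x assume "x \<in> bitstrings n"
        then have "length (take (I n) (g x)) = I n" using TI(1)[OF nF] assms(1) by (simp add: bitstrings_def)
        then show "of_bool (cond_out (A n) (take (I n) (g x)) = g x ! I n)
          = (of_bool ((if nd_out (D n) (take (I n) (g x) @ Bf n # R n) then \<not> Bf n else Bf n) = g x ! I n) :: real)"
          using b nF by (simp add: A_def co_fix_out)
      qed
      then show "\<exists>i < m n. measure_pmf.prob (map_pmf g (U n)) {z. cond_out (A n) (take i z) = z ! i}
               \<ge> 1/2 + 1 / poly q (real n)"
        using TI[OF nF] unfolding probeq corr_def by (intro exI[of _ "I n"]) simp
    qed
    then have "infinite {n. \<exists>i < m n. measure_pmf.prob (map_pmf g (U n)) {z. cond_out (A n) (take i z) = z ! i}
               \<ge> 1/2 + 1 / poly q (real n)}" using inf1 infinite_super by blast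
    then have "predictable cond_out (\<lambda>n. map_pmf g (U n)) m"
      unfolding predictable_def using Apb qpos by blast
    then show False using assms(5) unfolding coNP_unpredictable_def by blast
  qed
qed


end
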